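(* Let $R$ be a $*$-ring. Then $R$ is strongly $*$-clean and $\pi$-regular if and only if $R$ is strongly $\pi$-$*$-regular.
   Context: A $*$-ring is a ring with identity with an involution $*$. A projection is $p$ with $p^2=p=p^*$. $R$ is strongly $*$-clean if each element is a sum of a projection and a unit commuting with each other. $R$ is $\pi$-regular if for each $a$ there exist $n\ge1$ and $b$ with $a^n=a^nba^n$. $R$ is strongly $\pi$-$*$-regular if for every $a$ there exist a projection $e$, a unit $u$ and $m\ge1$ with $a^m=eu$ and $a,e,u$ pairwise commuting. *)

theory Defs
  imports Main
begin

class star_ring = ring_1 +
  fixes star :: "'a \<Rightarrow> 'a"
  assumes star_add: "star (x + y) = star x + star y"
    and star_mult: "star (x * y) = star y * star x"
    and star_star: "star (star x) = x"

context star_ring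
begin

definition is_unit :: "'a \<Rightarrow> bool" where
  "is_unit u \<longleftrightarrow> (\<exists>v. u * v = 1 \<and> v * u = 1)"

definition projection :: "'a \<Rightarrow> bool" where
  "projection p \<longleftrightarrow> p * p = p \<and> p = star p"

definition strongly_star_clean :: "'a itself \<Rightarrow> bool" where
  "strongly_star_clean _ \<longleftrightarrow>
     (\<forall>a. \<exists>p u. projection p \<and> is_unit u \<and> a = p + u \<and> p * u = u * p)"

definition pi_regular :: "'a itself \<Rightarrow> bool" where
  "pi_regular _ \<longleftrightarrow> (\<forall>a. \<exists>n b. n \<ge> 1 \<and> a ^ n = a ^ n * b * a ^ n)"

definition strongly_pi_star_regular :: "'a itself \<Rightarrow> bool" where
  "strongly_pi_star_regular _ \<longleftrightarrow>
     (\<forall>a. \<exists>e u m. projection e \<and> is_unit u \<and> m \<ge> 1 \<and> a ^ m = e * u \<and>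
        a * e = e * a \<and> a * u = u * a \<and> e * u = u * e)"

end

end

theory Submission
  imports Defs
begin

context star_ring
begin

lemma star_one: "star 1 = 1"
proof -
  have "1 = star (star 1 * 1)" by (simp add: star_star)
  also have "\<dots> = star 1 * star (star 1)" by (rule star_mult)
  also have "\<dots> = star 1" by (simp add: star_star)
  finally show ?thesis by simp
qed

lemma star_zero: "star 0 = 0"
proof -
  have "star 0 = star (0 + 0)" by simp
  also have "\<dots> = star 0 + star 0" by (rule star_add)
  finally show ?thesis by simp
qed

lemma star_minus: "star (- x) = - star x"
proof -
  have "star (- x) + star x = 0" by (metis star_add star_zero left_minus)
  then show ?thesis by (simp add: eq_neg_iff_add_eq_0)
qed

lemma star_diff: "star (x - y) = star x - star y"
  by (simp only: diff_conv_add_uminus star_add star_minus)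

lemma geo1: "(1 - x) * (\<Sum>i<k. x ^ i) = 1 - x ^ k"
proof (induction k)
  case 0 then show ?case by simp
next
  case (Suc k)
  have "(1 - x) * (\<Sum>i<Suc k. x ^ i) = (1 - x) * (\<Sum>i<k. x ^ i) + (1 - x) * x ^ k"
    by (simp add: distrib_left)
  also have "\<dots> = 1 - x ^ k + (1 - x) * x ^ k" using Suc by simp
  finally show ?case by (simp add: algebra_simps)
qed

lemma geo2: "(\<Sum>i<k. x ^ i) * (1 - x) = 1 - x ^ k"
proof (induction k)
  case 0 then show ?case by simp
next
  case (Suc k)
  have "(\<Sum>i<Suc k. x ^ i) * (1 - x) = (\<Sum>i<k. x ^ i) * (1 - x) + x ^ k * (1 - x)"
    by (simp add: distrib_right)
  also have "\<dots> = 1 - x ^ k + x ^ k * (1 - x)" using Suc by simp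
  finally show ?case by (simp add: algebra_simps power_Suc2 del: power_Suc)
qed

lemma nil_unit: "x ^ k = 0 \<Longrightarrow> is_unit (1 - x)"
  unfolding is_unit_def using geo1[of x k] geo2[of x k] by auto

lemma unit_mult: "is_unit a \<Longrightarrow> is_unit b \<Longrightarrow> is_unit (a * b)"
proof -
  assume "is_unit a" "is_unit b"
  then obtain a' b' where A: "a * a' = 1" "a' * a = 1" and B: "b * b' = 1" "b' * b = 1"
    unfolding is_unit_def by blast
  have "a * b * (b' * a') = a * (b * b') * a'" by (simp add: mult.assoc)
  moreover have "b' * a' * (a * b) = b' * (a' * a) * b" by (simp add: mult.assoc)
  ultimately show ?thesis unfolding is_unit_def using A B by (metis mult_1_right mult_1_left)
qed

lemma comm_power: "x * y = y * x \<Longrightarrow> (x * y) ^ k = x ^ k * y ^ k"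
proof (induction k)
  case 0 then show ?case by simp
next
  case (Suc k)
  have h: "y * x ^ k = x ^ k * y" using power_commuting_commutes[of x y k] Suc.prems by simp
  have "(x * y) ^ Suc k = x * y * (x ^ k * y ^ k)" using Suc by simp
  also have "\<dots> = x * (y * x ^ k) * y ^ k" by (simp add: mult.assoc)
  also have "\<dots> = x * (x ^ k * y) * y ^ k" using h by simp
  also have "\<dots> = x ^ Suc k * y ^ Suc k" by (simp add: mult.assoc)
  finally show ?case .
qed

lemma idem_power: "f * f = f \<Longrightarrow> f ^ Suc k = f"
  by (induction k) (simp_all add: mult.assoc[symmetric])

lemma inv_comm:
  assumes "u * v = 1" "v * u = 1" "a * u = u * a"
  shows "a * v = v * a"
proof -
  have "v * a = v * a * (u * v)" using assms by simp
  also have "\<dots> = v * (a * u) * v" by (simp add: mult.assoc)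
  also have "\<dots> = v * (u * a) * v" using assms by simp
  also have "\<dots> = (v * u) * a * v" by (simp add: mult.assoc)
  finally show ?thesis using assms by simp
qed

lemma spsr_clean:
  assumes P: "projection e" and U: "u * v = 1" "v * u = 1" and m: "m \<ge> 1"
    and am: "a ^ m = e * u" and ae: "a * e = e * a" and au: "a * u = u * a" and eu: "e * u = u * e"
  shows "\<exists>p w. projection p \<and> is_unit w \<and> a = p + w \<and> p * w = w * p"
proof -
  define f where "f = 1 - e"
  have ee: "e * e = e" and se: "star e = e" using P unfolding projection_def by auto
  have ff: "f * f = f" unfolding f_def using ee by (simp add: algebra_simps)
  have ef: "e * f = 0" "f * e = 0" unfolding f_def using ee by (simp_all add: algebra_simps)
  have af: "a * f = f * a" unfolding f_def using ae by (simp add: algebra_simps)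
  have pf: "projection f" unfolding projection_def f_def
    using ff star_diff star_one se by (simp add: f_def)
  have av: "a * v = v * a" using inv_comm[OF U au] .
  have ev: "e * v = v * e" using inv_comm[OF U eu] .
  obtain k where k: "m = Suc k" using m by (cases m) auto
  have apk: "a ^ m = a * a ^ k" using k by simp
  have apk2: "a ^ m = a ^ k * a" using k by (simp add: power_Suc2 del: power_Suc)
  have fak: "a ^ k * f = f * a ^ k" using power_commuting_commutes[OF af] .
  have vak: "a ^ k * v = v * a ^ k" using power_commuting_commutes[OF av] .
  have eak: "a ^ k * e = e * a ^ k" using power_commuting_commutes[OF ae] .
  define x where "x = e * v * a ^ k"
  have evu: "e * v * (e * u) = e"
  proof -
    have "e * v * (e * u) = e * (v * e) * u" by (simp add: mult.assoc)
    also have "\<dots> = e * (e * v) * u" using ev by simp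
    also have "\<dots> = e * e * (v * u)" by (simp add: mult.assoc)
    finally show ?thesis using ee U by simp
  qed
  have x1: "a * e * x = e"
  proof -
    have "a * e * x = a * e * e * v * a ^ k" by (simp add: x_def mult.assoc)
    also have "\<dots> = (a * e) * v * a ^ k" using ee by (simp add: mult.assoc)
    also have "\<dots> = e * (a * v) * a ^ k" using ae by (simp add: mult.assoc)
    also have "\<dots> = e * v * (a * a ^ k)" using av by (simp add: mult.assoc)
    also have "\<dots> = e * v * (e * u)" using apk am by simp
    finally show ?thesis using evu by simp
  qed
  have x2: "x * (a * e) = e"
  proof -
    have "x * (a * e) = e * v * (a ^ k * a) * e" by (simp add: x_def mult.assoc)
    also have "\<dots> = e * v * (e * u) * e" using apk2 am by simp
    finally show ?thesis using evu ee by simp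
  qed
  have fx: "f * x = 0" by (simp add: x_def mult.assoc[symmetric] ef)
  have xf: "x * f = 0"
  proof -
    have vf: "v * f = f * v" unfolding f_def using ev by (simp add: algebra_simps)
    have "x * f = e * v * (a ^ k * f)" by (simp add: x_def mult.assoc)
    also have "\<dots> = e * v * (f * a ^ k)" using fak by simp
    also have "\<dots> = e * (v * f) * a ^ k" by (simp add: mult.assoc)
    also have "\<dots> = e * (f * v) * a ^ k" using vf by simp
    also have "\<dots> = (e * f) * v * a ^ k" by (simp add: mult.assoc)
    finally show ?thesis using ef by simp
  qed
  have aef: "a * e * f = 0" by (simp add: mult.assoc ef)
  have fae: "f * (a * e) = 0"
  proof -
    have "f * (a * e) = (f * a) * e" by (simp add: mult.assoc)
    also have "\<dots> = (a * f) * e" using af by simp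
    also have "\<dots> = a * (f * e)" by (simp add: mult.assoc)
    finally show ?thesis using ef by simp
  qed
  have ef1: "e + f = 1" by (simp add: f_def algebra_simps)
  have u1: "is_unit (a * e - f)"
    unfolding is_unit_def
  proof (intro exI conjI)
    have "(a * e - f) * (x - f) = a * e * x - a * e * f - f * x + f * f"
      by (simp add: algebra_simps)
    also have "\<dots> = e + f" using x1 aef fx ff by simp
    finally show "(a * e - f) * (x - f) = 1" using ef1 by simp
    have "(x - f) * (a * e - f) = x * (a * e) - x * f - f * (a * e) + f * f"
      by (simp add: algebra_simps)
    also have "\<dots> = e + f" using x2 xf fae ff by simp
    finally show "(x - f) * (a * e - f) = 1" using ef1 by simp
  qed
  have nz: "(a * f) ^ m = 0"
  proof -
    have h1: "(a * f) ^ m = a ^ m * f ^ m" using comm_power[OF af] .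
    have h2: "f ^ m = f" using idem_power[OF ff] k by simp
    have h3: "a ^ m * f = e * (u * f)" using am by (simp add: mult.assoc)
    have h4: "u * f = f * u" unfolding f_def using eu by (simp add: algebra_simps)
    have h5: "e * (f * u) = 0" by (simp add: mult.assoc[symmetric] ef)
    show ?thesis using h1 h2 h3 h4 h5 by simp
  qed
  have u2: "is_unit (1 - a * f)" using nil_unit[OF nz] .
  have fact: "(a * e - f) * (1 - a * f) = a - f"
  proof -
    have "a * e * (a * f) = a * a * (e * f)" using ae by (metis mult.assoc)
    then have A: "a * e * (a * f) = 0" using ef by simp
    have B: "f * (a * f) = a * f" using af ff by (metis mult.assoc)
    have "(a * e - f) * (1 - a * f) = a * e - a * e * (a * f) - f + f * (a * f)"
      by (simp add: algebra_simps)
    also have "\<dots> = a * e + a * f - f" using A B by (simp add: algebra_simps)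
    also have "\<dots> = a - f" unfolding f_def by (simp add: algebra_simps)
    finally show ?thesis .
  qed
  have "is_unit (a - f)" using unit_mult[OF u1 u2] fact by simp
  moreover have "f * (a - f) = (a - f) * f" using af by (simp add: algebra_simps)
  moreover have "a = f + (a - f)" by (simp add: algebra_simps)
  ultimately show ?thesis using pf by blast
qed

lemma idem_proj:
  assumes SC: "strongly_star_clean TYPE('a)" and ee: "e * e = e"
  shows "star e = e"
proof -
  obtain p w where P: "projection p" and W: "is_unit w" and epw: "e = p + w" and pw: "p * w = w * p"
    using SC unfolding strongly_star_clean_def by blast
  obtain w' where W1: "w * w' = 1" "w' * w = 1" using W unfolding is_unit_def by blast
  have pp: "p * p = p" and sp: "star p = p" using P unfolding projection_def by auto
  have w: "w = e - p" using epw by simp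
  have pe: "p * e = e * p" using pw pp by (simp add: epw algebra_simps)
  define q where "q = p - p * e"
  have wp: "w * p = - q" unfolding q_def w using pe pp by (simp add: algebra_simps)
  have qe: "q * e = 0" unfolding q_def using ee by (simp add: algebra_simps mult.assoc)
  have qq: "q * q = q"
  proof -
    have qp: "q * p = q" unfolding q_def using pp pe by (simp add: algebra_simps mult.assoc[symmetric])
    have "q * q = q * p - q * (p * e)" unfolding q_def by (simp add: algebra_simps)
    also have "\<dots> = q * p - (q * p) * e" by (simp add: mult.assoc)
    also have "\<dots> = q - q * e" using qp by simp
    finally show ?thesis using qe by simp
  qed
  have p1: "p = - (w' * q)"
  proof -
    have "p = w' * w * p" using W1 by simp
    also have "\<dots> = w' * (w * p)" by (simp add: mult.assoc)
    finally show ?thesis using wp by simp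
  qed
  have "p = - (w' * (q * q))" using p1 qq by simp
  also have "\<dots> = p * q" using p1 by (simp add: mult.assoc)
  also have "\<dots> = q" unfolding q_def using pp by (simp add: algebra_simps mult.assoc[symmetric])
  finally have "p = q" .
  then have pq: "p = p - p * e" unfolding q_def .
  have "p * e = p - (p - p * e)" by (simp add: algebra_simps)
  also have "\<dots> = 0" using pq[symmetric] by simp
  finally have pe0: "p * e = 0" .
  have ep0: "e * p = 0" using pe pe0 by simp
  have we: "w * (1 - p) = e" unfolding w using ep0 pp by (simp add: algebra_simps)
  have e1: "1 - p = w' * e"
  proof -
    have "1 - p = w' * w * (1 - p)" using W1 by simp
    also have "\<dots> = w' * e" using we by (simp add: mult.assoc)
    finally show ?thesis .
  qed
  have "1 - p = w' * (e * e)" using e1 ee by simp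
  also have "\<dots> = (1 - p) * e" using e1 by (simp add: mult.assoc)
  also have "\<dots> = e" using pe0 by (simp add: algebra_simps)
  finally have "e = 1 - p" by simp
  then show ?thesis using star_diff star_one sp by simp
qed

lemma idem_central:
  assumes SC: "strongly_star_clean TYPE('a)" and ee: "e * e = e"
  shows "e * r = r * e"
proof -
  have se: "star e = e" using idem_proj[OF SC ee] .
  define f where "f = 1 - e"
  have sf: "star f = f" unfolding f_def using star_diff star_one se by simp
  have ef: "e * f = 0" "f * e = 0" unfolding f_def using ee by (simp_all add: algebra_simps)
  have ef1: "e + f = 1" unfolding f_def by (simp add: algebra_simps)
  define s where "s = star r"
  define g where "g = e + e * r * f"
  have gg: "g * g = g"
  proof -
    have "g * g = e * e + e * (e * r * f) + (e * r * f) * e + (e * r * f) * (e * r * f)"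
      unfolding g_def by (simp add: algebra_simps)
    also have "\<dots> = e + e * r * f"
    proof -
      have fe: "\<And>X. f * (e * X) = 0" using ef by (simp add: mult.assoc[symmetric])
      have eeX: "\<And>X. e * (e * X) = e * X" using ee by (simp add: mult.assoc[symmetric])
      have A: "(e * r * f) * e = 0" using ef by (simp add: mult.assoc)
      have B: "(e * r * f) * (e * r * f) = 0" using fe by (simp add: mult.assoc)
      have C: "e * (e * r * f) = e * r * f" using eeX by (simp add: mult.assoc)
      show ?thesis using A B C ee by simp
    qed
    finally show ?thesis unfolding g_def .
  qed
  have sg: "star g = g" using idem_proj[OF SC gg] .
  have "star g = e + f * s * e" unfolding g_def s_def using star_add star_mult se sf
    by (simp add: mult.assoc)
  then have erf: "e * r * f = f * s * e" using sg unfolding g_def by simp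
  have erf0: "e * r * f = 0"
  proof -
    have "e * (e * r * f) = e * r * f" using ee by (simp add: mult.assoc[symmetric])
    moreover have "e * (f * s * e) = 0" using ef by (simp add: mult.assoc[symmetric])
    ultimately show ?thesis using erf by simp
  qed
  define h where "h = e + f * r * e"
  have hh: "h * h = h"
  proof -
    have "h * h = e * e + e * (f * r * e) + (f * r * e) * e + (f * r * e) * (f * r * e)"
      unfolding h_def by (simp add: algebra_simps)
    also have "\<dots> = e + f * r * e"
    proof -
      have eX: "\<And>X. e * (f * X) = 0" using ef by (simp add: mult.assoc[symmetric])
      have eeX: "\<And>X. e * (e * X) = e * X" using ee by (simp add: mult.assoc[symmetric])
      have A: "(f * r * e) * e = f * r * e" using ee by (simp add: mult.assoc)
      have B: "(f * r * e) * (f * r * e) = 0" using eX by (simp add: mult.assoc)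
      have C: "e * (f * r * e) = 0" using eX by (simp add: mult.assoc)
      show ?thesis using A B C ee by simp
    qed
    finally show ?thesis unfolding h_def .
  qed
  have sh: "star h = h" using idem_proj[OF SC hh] .
  have "star h = e + e * s * f" unfolding h_def s_def using star_add star_mult se sf
    by (simp add: mult.assoc)
  then have fre: "f * r * e = e * s * f" using sh unfolding h_def by simp
  have fre0: "f * r * e = 0"
  proof -
    have "(f * r * e) * e = f * r * e" using ee by (simp add: mult.assoc)
    moreover have "(e * s * f) * e = 0" using ef by (simp add: mult.assoc)
    ultimately show ?thesis using fre by simp
  qed
  have "e * r = e * r * (e + f)" using ef1 by simp
  also have "\<dots> = e * r * e" using erf0 by (simp add: distrib_left)
  also have "\<dots> = (e + f) * r * e" using fre0 by (simp add: distrib_right)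
  also have "\<dots> = r * e" using ef1 by simp
  finally show ?thesis .
qed

lemma clean_pireg:
  assumes SC: "strongly_star_clean TYPE('a)" and an: "a ^ n = a ^ n * b * a ^ n" and n: "n \<ge> 1"
  shows "\<exists>e u m. projection e \<and> is_unit u \<and> m \<ge> 1 \<and> a ^ m = e * u \<and>
        a * e = e * a \<and> a * u = u * a \<and> e * u = u * e"
proof -
  define x where "x = a ^ n"
  have xx: "x = x * b * x" using an unfolding x_def .
  define e where "e = x * b"
  define h where "h = b * x"
  have ee: "e * e = e" unfolding e_def using xx by (metis mult.assoc)
  have hh: "h * h = h" unfolding h_def using xx by (metis mult.assoc)
  have ce: "\<And>r. e * r = r * e" using idem_central[OF SC ee] .
  have ch: "\<And>r. h * r = r * h" using idem_central[OF SC hh] .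
  have ex: "e * x = x" unfolding e_def using xx by simp
  have xe: "x * e = x" using ex ce by simp
  have "e = x * h * b" unfolding e_def h_def using xx by (metis mult.assoc)
  also have "\<dots> = h * e" using ch unfolding e_def by (metis mult.assoc)
  finally have e1: "e = h * e" .
  have "h = b * e * x" unfolding e_def h_def using xx by (metis mult.assoc)
  also have "\<dots> = e * h" using ce unfolding h_def by (metis mult.assoc)
  finally have "h = e * h" .
  then have eh: "e = h" using e1 ce by metis
  define u where "u = x + (1 - e)"
  define c where "c = b * e + (1 - e)"
  have ebe: "e * b * e = b * e" using ce ee by (metis mult.assoc)
  have "u * c = x * b * e + x * (1 - e) + (1 - e) * b * e + (1 - e) * (1 - e)"
    unfolding u_def c_def by (simp add: algebra_simps)
  also have "\<dots> = 1"
    using ee xe ebe by (simp add: algebra_simps e_def[symmetric])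
  finally have uc: "u * c = 1" .
  have "c * u = b * e * x + b * e * (1 - e) + (1 - e) * x + (1 - e) * (1 - e)"
    unfolding u_def c_def by (simp add: algebra_simps)
  also have "\<dots> = 1"
  proof -
    have h1: "b * e * x = h" unfolding h_def using ex by (simp add: mult.assoc)
    have h2: "b * e * (1 - e) = 0" using ee by (simp add: algebra_simps mult.assoc)
    have h3: "(1 - e) * x = 0" using ex by (simp add: algebra_simps)
    have h4: "(1 - e) * (1 - e) = 1 - e" using ee by (simp add: algebra_simps)
    show ?thesis by (simp only: h1 h2 h3 h4) (simp add: eh algebra_simps)
  qed
  finally have cu: "c * u = 1" .
  have eu: "e * u = x" unfolding u_def using ex ee by (simp add: algebra_simps)
  have ax: "a * x = x * a" unfolding x_def by (simp add: power_commutes)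
  have au: "a * u = u * a" unfolding u_def using ax ce[of a] by (simp add: algebra_simps)
  have pe: "projection e" unfolding projection_def using ee idem_proj[OF SC ee] by simp
  have "is_unit u" unfolding is_unit_def using uc cu by blast
  moreover have "a ^ n = e * u" using eu unfolding x_def by simp
  ultimately show ?thesis using pe n ce[of a, symmetric] ce[of u] au by blast
qed

end


theorem corollary3p8:
  "(strongly_star_clean TYPE('a::star_ring) \<and> pi_regular TYPE('a))
     \<longleftrightarrow> strongly_pi_star_regular TYPE('a)"
proof
  assume H: "strongly_star_clean TYPE('a::star_ring) \<and> pi_regular TYPE('a)"
  show "strongly_pi_star_regular TYPE('a)"
    unfolding strongly_pi_star_regular_def
  proof
    fix a :: 'a
    obtain n b where "n \<ge> 1" "a ^ n = a ^ n * b * a ^ n"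
      using H unfolding pi_regular_def by blast
    then show "\<exists>e u m. projection e \<and> is_unit u \<and> m \<ge> 1 \<and> a ^ m = e * u \<and>
        a * e = e * a \<and> a * u = u * a \<and> e * u = u * e"
      using clean_pireg H by blast
  qed
next
  assume H: "strongly_pi_star_regular TYPE('a::star_ring)"
  have SC: "strongly_star_clean TYPE('a)"
    unfolding strongly_star_clean_def
  proof
    fix a :: 'a
    obtain e u m where E: "projection e" "is_unit u" "m \<ge> 1" "a ^ m = e * u"
        "a * e = e * a" "a * u = u * a" "e * u = u * e"
      using H unfolding strongly_pi_star_regular_def by blast
    obtain v where "u * v = 1" "v * u = 1" using E(2) unfolding is_unit_def by blast
    then show "\<exists>p u. projection p \<and> is_unit u \<and> a = p + u \<and> p * u = u * p"
      using spsr_clean[OF E(1) _ _ E(3-7)] by blast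
  qed
  have PR: "pi_regular TYPE('a)"
    unfolding pi_regular_def
  proof
    fix a :: 'a
    obtain e u m where E: "projection e" "is_unit u" "m \<ge> 1" "a ^ m = e * u"
        "a * e = e * a" "a * u = u * a" "e * u = u * e"
      using H unfolding strongly_pi_star_regular_def by blast
    obtain v where V: "u * v = 1" "v * u = 1" using E(2) unfolding is_unit_def by blast
    have ee: "e * e = e" using E(1) unfolding projection_def by simp
    have "a ^ m * v * a ^ m = e * (u * v) * e * u" using E(4) by (simp add: mult.assoc)
    also have "\<dots> = e * u" using V ee by simp
    finally have "a ^ m = a ^ m * v * a ^ m" using E(4) by simp
    then show "\<exists>n b. n \<ge> 1 \<and> a ^ n = a ^ n * b * a ^ n" using E(3) by blast
  qed
  show "strongly_star_clean TYPE('a) \<and> pi_regular TYPE('a)" using SC PR by blast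
qed

end
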